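(* Assume $n\ge 2$ and $\chi\neq\{0\}$. The reshuffling property and the source-anonymous contributions property are independent: there exists a risk-sharing rule on $\chi^n$ that satisfies the reshuffling property but does not have source-anonymous contributions, and there exists a risk-sharing rule on $\chi^n$ that has source-anonymous contributions but does not satisfy the reshuffling property.
   Context: Fix a probability space $(\Omega,\mathcal{F},\mathbb{P})$ and an integer $n$. Let $\chi$ be a convex cone of non-negative random variables on this space (closed under addition and under multiplication by positive scalars) with $0\in\chi$. Equalities between random variables are understood almost surely. A pool is a vector $\boldsymbol{X}=(X_1,\ldots,X_n)\in\chi^n$, with aggregate loss $S_{\boldsymbol{X}}=\sum_{i=1}^n X_i$. A risk-sharing (RS) rule is a mapping $\boldsymbol{C}$ assigning to every pool $\boldsymbol{X}\in\chi^n$ a vector $\boldsymbol{C}[\boldsymbol{X}]=(C_1[\boldsymbol{X}],\ldots,C_n[\boldsymbol{X}])$ of real-valued random variables satisfying $\sum_{i=1}^n C_i[\boldsymbol{X}]=S_{\boldsymbol{X}}$. For a permutation $\pi$ of $\{1,\ldots,n\}$, $\boldsymbol{X}^\pi=(X_{\pi(1)},\ldots,X_{\pi(n)})$. Reshuffling property: $C_i[\boldsymbol{X}^\pi]=C_{\pi(i)}[\boldsymbol{X}]$ for all pools $\boldsymbol{X}$, permutations $\pi$ and indices $i$. Source-anonymous contributions: $C_i[\boldsymbol{X}^\pi]=C_i[\boldsymbol{X}]$ for all pools $\boldsymbol{X}$, permutations $\pi$ and indices $i$. *)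

theory Defs
  imports "HOL-Probability.Probability" "HOL-Combinatorics.Permutations" "HOL-Library.FuncSet"
begin

text \<open>Random variables are real-valued measurable functions on the probability space M;
  (K plays the role of the cone chi) equalities between random variables are understood almost surely.\<close>

definition rv_cone :: "'a measure \<Rightarrow> ('a \<Rightarrow> real) set \<Rightarrow> bool" where
  "rv_cone M K \<longleftrightarrow>
     K \<subseteq> borel_measurable M \<and>
     (\<forall>X\<in>K. AE \<omega> in M. 0 \<le> X \<omega>) \<and>
     (\<lambda>_. 0) \<in> K \<and>
     (\<forall>X\<in>K. \<forall>Y\<in>K. (\<lambda>\<omega>. X \<omega> + Y \<omega>) \<in> K) \<and>
     (\<forall>X\<in>K. \<forall>c::real. c > 0 \<longrightarrow> (\<lambda>\<omega>. c * X \<omega>) \<in> K)"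

definition pools :: "('a \<Rightarrow> real) set \<Rightarrow> nat \<Rightarrow> (nat \<Rightarrow> 'a \<Rightarrow> real) set" where
  "pools K n = {0..<n} \<rightarrow>\<^sub>E K"

definition agg :: "nat \<Rightarrow> (nat \<Rightarrow> 'a \<Rightarrow> real) \<Rightarrow> 'a \<Rightarrow> real" where
  "agg n X = (\<lambda>\<omega>. \<Sum>i<n. X i \<omega>)"

definition rs_rule :: "'a measure \<Rightarrow> ('a \<Rightarrow> real) set \<Rightarrow> nat \<Rightarrow>
    ((nat \<Rightarrow> 'a \<Rightarrow> real) \<Rightarrow> nat \<Rightarrow> 'a \<Rightarrow> real) \<Rightarrow> bool" where
  "rs_rule M K n C \<longleftrightarrow>
     (\<forall>X\<in>pools K n. \<forall>i<n. C X i \<in> borel_measurable M) \<and>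
     (\<forall>X\<in>pools K n. AE \<omega> in M. (\<Sum>i<n. C X i \<omega>) = agg n X \<omega>) \<and>
     (\<forall>X\<in>pools K n. \<forall>Y\<in>pools K n.
        (\<forall>i<n. AE \<omega> in M. X i \<omega> = Y i \<omega>) \<longrightarrow> (\<forall>i<n. AE \<omega> in M. C X i \<omega> = C Y i \<omega>))"

definition reshuffling :: "'a measure \<Rightarrow> ('a \<Rightarrow> real) set \<Rightarrow> nat \<Rightarrow>
    ((nat \<Rightarrow> 'a \<Rightarrow> real) \<Rightarrow> nat \<Rightarrow> 'a \<Rightarrow> real) \<Rightarrow> bool" where
  "reshuffling M K n C \<longleftrightarrow>
     (\<forall>X\<in>pools K n. \<forall>\<pi>. \<pi> permutes {0..<n} \<longrightarrow>
        (\<forall>i<n. AE \<omega> in M. C (X \<circ> \<pi>) i \<omega> = C X (\<pi> i) \<omega>))"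

definition source_anonymous :: "'a measure \<Rightarrow> ('a \<Rightarrow> real) set \<Rightarrow> nat \<Rightarrow>
    ((nat \<Rightarrow> 'a \<Rightarrow> real) \<Rightarrow> nat \<Rightarrow> 'a \<Rightarrow> real) \<Rightarrow> bool" where
  "source_anonymous M K n C \<longleftrightarrow>
     (\<forall>X\<in>pools K n. \<forall>\<pi>. \<pi> permutes {0..<n} \<longrightarrow>
        (\<forall>i<n. AE \<omega> in M. C (X \<circ> \<pi>) i \<omega> = C X i \<omega>))"

end

theory Submission
  imports Defs
begin

theorem proposition2:
  fixes M :: "'a measure" and K :: "('a \<Rightarrow> real) set" and n :: nat
  assumes "prob_space M"
    and "rv_cone M K"
    and "n \<ge> 2"
    and "\<exists>X\<in>K. \<not> (AE \<omega> in M. X \<omega> = 0)"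
  shows "(\<exists>C. rs_rule M K n C \<and> reshuffling M K n C \<and> \<not> source_anonymous M K n C) \<and>
         (\<exists>C. rs_rule M K n C \<and> source_anonymous M K n C \<and> \<not> reshuffling M K n C)"
proof -
  obtain Z where ZK: "Z \<in> K" and Znz: "\<not> (AE \<omega> in M. Z \<omega> = 0)" using assms(4) by blast
  have cone: "K \<subseteq> borel_measurable M" "(\<lambda>_. 0) \<in> K" using assms(2) unfolding rv_cone_def by auto
  define X0 :: "nat \<Rightarrow> 'a \<Rightarrow> real" where
    "X0 = (\<lambda>i. if i = 0 then Z else if i < n then (\<lambda>_. 0) else undefined)"
  have X0p: "X0 \<in> pools K n" unfolding pools_def X0_def using ZK cone assms(3) by (auto simp: PiE_iff extensional_def)
  define \<pi> where "\<pi> = Transposition.transpose (0::nat) 1"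
  have pp: "\<pi> permutes {0..<n}" unfolding \<pi>_def using assms(3) by (intro permutes_swap_id) auto
  have p0: "\<pi> 0 = 1" and p1: "\<pi> 1 = 0" unfolding \<pi>_def by auto
  have n1: "1 < n" "0 < n" using assms(3) by auto
  have Z0: "\<not> (AE \<omega> in M. 0 = Z \<omega>)" using Znz by (smt (verit, best) eventually_mono)
  have Z0': "\<not> (AE \<omega> in M. Z \<omega> = 0)" using Znz .
  have meas: "\<And>X i. X \<in> pools K n \<Longrightarrow> i < n \<Longrightarrow> X i \<in> borel_measurable M"
    using cone unfolding pools_def by (auto simp: PiE_iff)
  have part1: "\<exists>C. rs_rule M K n C \<and> reshuffling M K n C \<and> \<not> source_anonymous M K n C"
  proof (intro exI conjI)
    show "rs_rule M K n (\<lambda>X. X)" unfolding rs_rule_def agg_def using meas by auto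
    show "reshuffling M K n (\<lambda>X. X)" unfolding reshuffling_def by auto
    show "\<not> source_anonymous M K n (\<lambda>X. X)"
    proof
      assume "source_anonymous M K n (\<lambda>X. X)"
      hence "AE \<omega> in M. (X0 \<circ> \<pi>) 0 \<omega> = X0 0 \<omega>" unfolding source_anonymous_def using X0p pp n1 by blast
      hence "AE \<omega> in M. 0 = Z \<omega>" using p0 n1 by (simp add: X0_def)
      thus False using Z0 by blast
    qed
  qed
  define C2 :: "(nat \<Rightarrow> 'a \<Rightarrow> real) \<Rightarrow> nat \<Rightarrow> 'a \<Rightarrow> real" where
    "C2 = (\<lambda>X i. if i = 0 then agg n X else (\<lambda>_. 0))"
  have aggperm: "agg n (X \<circ> p) = agg n X" if "p permutes {0..<n}" for X :: "nat \<Rightarrow> 'a \<Rightarrow> real" and p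
  proof -
    have ppn: "p permutes {..<n}" using that by (simp add: atLeast0LessThan)
    show ?thesis unfolding agg_def
    proof (intro ext)
      fix \<omega>
      have "(\<Sum>i<n. X i \<omega>) = (\<Sum>i<n. ((\<lambda>i. X i \<omega>) \<circ> p) i)"
        by (rule sum.permute[OF ppn])
      thus "(\<Sum>i<n. (X \<circ> p) i \<omega>) = (\<Sum>i<n. X i \<omega>)" by (simp only: comp_def)
    qed
  qed
  have part2: "\<exists>C. rs_rule M K n C \<and> source_anonymous M K n C \<and> \<not> reshuffling M K n C"
  proof (intro exI conjI)
    show "rs_rule M K n C2"
      unfolding rs_rule_def
    proof (intro conjI ballI allI impI)
      fix X i assume "X \<in> pools K n" "i < n"
      thus "C2 X i \<in> borel_measurable M" unfolding C2_def agg_def using meas by auto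
    next
      fix X assume "X \<in> pools K n"
      have "(\<Sum>i<n. C2 X i \<omega>) = agg n X \<omega>" for \<omega>
        unfolding C2_def using n1 by (simp add: if_distrib[where f="\<lambda>f. f \<omega>"] sum.delta cong: if_cong)
      thus "AE \<omega> in M. (\<Sum>i<n. C2 X i \<omega>) = agg n X \<omega>" by simp
    next
      fix X Y :: "nat \<Rightarrow> 'a \<Rightarrow> real" and i assume h: "\<forall>i<n. AE \<omega> in M. X i \<omega> = Y i \<omega>" and "i < n"
      have "AE \<omega> in M. \<forall>i\<in>{..<n}. X i \<omega> = Y i \<omega>" using h by (subst AE_finite_all) auto
      hence "AE \<omega> in M. agg n X \<omega> = agg n Y \<omega>" unfolding agg_def by (rule eventually_mono) simp
      thus "AE \<omega> in M. C2 X i \<omega> = C2 Y i \<omega>" unfolding C2_def by auto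
    qed
    show "source_anonymous M K n C2" unfolding source_anonymous_def C2_def using aggperm by auto
    show "\<not> reshuffling M K n C2"
    proof
      assume "reshuffling M K n C2"
      hence "AE \<omega> in M. C2 (X0 \<circ> \<pi>) 1 \<omega> = C2 X0 (\<pi> 1) \<omega>" unfolding reshuffling_def using X0p pp n1 by blast
      moreover have "agg n X0 = Z" unfolding agg_def
      proof (intro ext)
        fix \<omega>
        have "(\<Sum>i<n. X0 i \<omega>) = (\<Sum>i<n. if i = 0 then Z \<omega> else 0)"
          by (rule sum.cong) (auto simp: X0_def)
        also have "\<dots> = Z \<omega>" using n1 by (simp add: sum.delta)
        finally show "(\<Sum>i<n. X0 i \<omega>) = Z \<omega>" .
      qed
      ultimately have "AE \<omega> in M. 0 = Z \<omega>" using p1 by (simp add: C2_def)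
      thus False using Z0 by blast
    qed
  qed
  show ?thesis using part1 part2 by blast
qed

end
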